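(* Let $\mathcal{T} = \{\tau_1, \ldots, \tau_{i-1}, \tau_i\}$ be a set of tasks scheduled by preemptive fixed-priority scheduling on a single processor, ordered by decreasing priority ($\tau_1$ highest), where each task $\tau_j$ has worst-case computation time $C_j$, period (minimum inter-arrival time) $T_j$ and relative deadline $D_j$ (possibly $D_j > T_j$), with zero jitter. Let $H_i = \mathrm{lcm}(T_1, \ldots, T_i)$ and $h_i = H_i / T_i$. For $h \geq 1$, let $\mathcal{T}^{(h)}$ be the task set obtained from $\mathcal{T}$ by replacing $\tau_i$ with a task $\tau_i^{(h)}$ having computation time $C_i^{(h)} = h C_i$, deadline $D_i^{(h)} = (h-1) T_i + D_i$, the same period $T_i$ and the same priority as $\tau_i$. If for every $h = 1, \ldots, h_i$ the task $\tau_i^{(h)}$ completes before its deadline when scheduled in $\mathcal{T}^{(h)}$, then the first $h_i$ jobs of $\tau_i$ (scheduled in $\mathcal{T}$) also complete before their deadlines.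
   Context: A task $\tau_j$ releases an infinite sequence of jobs; the $k$-th job is activated at $a_{j,k}$, consecutive activations being separated by (at least) $T_j$, executes for at most $C_j$ time units and must finish by $a_{j,k} + D_j$. Under preemptive fixed-priority scheduling, at any time the processor executes the pending job of highest priority, and jobs of a task are executed in activation order (a job cannot start before the previous job of the same task has completed). *)

theory Defs
  imports Main
begin

text \<open>Tasks are numbered 1..n; a smaller index means a higher priority.
  C j: worst-case (here: actual) execution time of every job of task j;
  arr j k: activation time of the k-th job (k = 0, 1, ...) of task j.
  A service state s j k is the amount of processor time job k of task j has received.\<close>

text \<open>The current job of task j: its earliest job that is not yet complete
  (jobs of a task are executed in activation order).\<close>
definition cur_job :: "(nat \<Rightarrow> nat) \<Rightarrow> (nat \<Rightarrow> nat \<Rightarrow> nat) \<Rightarrow> nat \<Rightarrow> nat" where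
  "cur_job C s j = (LEAST k. s j k < C j)"

definition task_ready ::
  "(nat \<Rightarrow> nat) \<Rightarrow> (nat \<Rightarrow> nat \<Rightarrow> nat) \<Rightarrow> (nat \<Rightarrow> nat \<Rightarrow> nat) \<Rightarrow> nat \<Rightarrow> nat \<Rightarrow> bool" where
  "task_ready C arr s t j \<longleftrightarrow>
     s j (cur_job C s j) < C j \<and> arr j (cur_job C s j) \<le> t"

definition fp_choice ::
  "nat \<Rightarrow> (nat \<Rightarrow> nat) \<Rightarrow> (nat \<Rightarrow> nat \<Rightarrow> nat) \<Rightarrow> (nat \<Rightarrow> nat \<Rightarrow> nat) \<Rightarrow> nat \<Rightarrow> nat option" where
  "fp_choice n C arr s t =
     (if \<exists>j\<in>{1..n}. task_ready C arr s t j
      then Some (LEAST j. j \<in> {1..n} \<and> task_ready C arr s t j) else None)"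

text \<open>fp_service n C arr t j k: processor time received by job k of task j in [0, t).
  In slot [t, t+1) the processor executes the current job of the chosen task.\<close>
primrec fp_service ::
  "nat \<Rightarrow> (nat \<Rightarrow> nat) \<Rightarrow> (nat \<Rightarrow> nat \<Rightarrow> nat) \<Rightarrow> nat \<Rightarrow> nat \<Rightarrow> nat \<Rightarrow> nat" where
  "fp_service n C arr 0 = (\<lambda>j k. 0)"
| "fp_service n C arr (Suc t) =
     (let s = fp_service n C arr t in
      (\<lambda>j k. s j k + (if fp_choice n C arr s t = Some j \<and> k = cur_job C s j then 1 else 0)))"

definition completes_by ::
  "nat \<Rightarrow> (nat \<Rightarrow> nat) \<Rightarrow> (nat \<Rightarrow> nat \<Rightarrow> nat) \<Rightarrow> nat \<Rightarrow> nat \<Rightarrow> nat \<Rightarrow> bool" where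
  "completes_by n C arr j k t \<longleftrightarrow> C j \<le> fp_service n C arr t j k"

text \<open>Synchronous periodic activations with zero jitter: a_{j,k} = k T_j.\<close>
definition periodic_arr :: "(nat \<Rightarrow> nat) \<Rightarrow> nat \<Rightarrow> nat \<Rightarrow> nat" where
  "periodic_arr T j k = k * T j"

end

theory Submission
  imports Defs
begin
lemma arith1: assumes "(c::nat) > 0" shows "min c (w - k*c) + (if k = w div c then 1 else 0) = min c (w + 1 - k*c)"
proof -
  have w: "w = w div c * c + w mod c" by simp
  have r: "w mod c < c" using assms by simp
  consider "k < w div c" | "k = w div c" | "k > w div c" by linarith
  then show ?thesis
  proof cases
    case 1
    then have "Suc k \<le> w div c" by simp
    then have "Suc k * c \<le> w div c * c" by (rule mult_le_mono1)
    then have h1: "c + k*c \<le> w div c * c" by simp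
    have "w div c * c \<le> w" using w by linarith
    with h1 have "c + k*c \<le> w" by linarith
    then have "c \<le> w - k*c" "c \<le> w + 1 - k*c" by linarith+
    then show ?thesis using 1 by simp
  next
    case 2
    then have q: "k*c + w mod c = w" by simp
    then have "w - k*c = w mod c" "w + 1 - k*c = w mod c + 1" by linarith+
    then show ?thesis using r 2 by simp
  next
    case 3
    then have "Suc (w div c) \<le> k" by simp
    then have "Suc (w div c) * c \<le> k * c" by (rule mult_le_mono1)
    then have h1: "c + w div c * c \<le> k * c" by simp
    have "w + 1 \<le> k*c" using h1 r w by linarith
    then have "w - k*c = 0" "w + 1 - k*c = 0" by linarith+
    then show ?thesis using 3 by simp
  qed
qed
lemma least_div: assumes "(c::nat) > 0" shows "(LEAST k. min c (w - k*c) < c) = w div c"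
proof (rule Least_equality)
  show "min c (w - w div c * c) < c" using assms by (simp add: minus_div_mult_eq_mod)
  fix y assume "min c (w - y*c) < c" then have "w < c + y*c" by simp
  then have "w < Suc y * c" by simp
  then show "w div c \<le> y" using assms by (metis div_less_iff_less_mult less_Suc_eq_le)
qed
lemma sub: assumes "(T::nat) > 0" shows "(s+x+T-1) div T \<le> (s+T-1) div T + (x+T-1) div T"
proof -
  have a: "s \<le> (s+T-1) div T * T"
  proof -
    have "(s+T-1) mod T < T" using assms by simp
    moreover have "(s+T-1) div T * T + (s+T-1) mod T = s+T-1" by simp
    ultimately show ?thesis using assms by linarith
  qed
  have b: "x \<le> (x+T-1) div T * T"
  proof -
    have "(x+T-1) mod T < T" using assms by simp
    moreover have "(x+T-1) div T * T + (x+T-1) mod T = x+T-1" by simp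
    ultimately show ?thesis using assms by linarith
  qed
  have "s + x + T - 1 < ((s+T-1) div T + (x+T-1) div T + 1) * T" using a b assms by (simp add: algebra_simps)
  then show ?thesis using assms by (metis div_less_iff_less_mult less_Suc_eq_le Suc_eq_plus1)
qed

primrec Bc :: "(nat \<Rightarrow> nat) \<Rightarrow> nat \<Rightarrow> nat" where
  "Bc R 0 = 0"
| "Bc R (Suc u) = Bc R u + (if Bc R u < R u then 1 else 0)"

lemma Bc_le: "Bc R t \<le> t"
  by (induction t) auto

lemma Bc_mono: "s \<le> t \<Longrightarrow> Bc R s \<le> Bc R t"
  by (induction t) (auto simp: le_Suc_eq)

lemma Bc_lip: "s \<le> t \<Longrightarrow> Bc R t \<le> Bc R s + (t - s)"
proof (induction t)
  case 0 then show ?case by simp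
next
  case (Suc t)
  show ?case
  proof (cases "s = Suc t")
    case True then show ?thesis by simp
  next
    case False
    with Suc.prems have "s \<le> t" by simp
    with Suc.IH have "Bc R t \<le> Bc R s + (t - s)" by simp
    then show ?thesis using \<open>s \<le> t\<close> by auto
  qed
qed

locale arrv =
  fixes R Rb :: "nat \<Rightarrow> nat"
  assumes R_Rb: "\<And>u. R u = Rb (Suc u)"
    and Rb_mono: "\<And>x y. x \<le> y \<Longrightarrow> Rb x \<le> Rb y"
    and Rb0: "Rb 0 = 0"
    and Rb_sub: "\<And>x y. Rb (x + y) \<le> Rb x + Rb y"
begin

lemma B_le_Rb: "Bc R t \<le> Rb t"
proof (induction t)
  case 0 then show ?case by (simp add: Rb0)
next
  case (Suc t)
  have "Rb t \<le> Rb (Suc t)" by (rule Rb_mono) simp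
  then show ?case using Suc R_Rb[of t] by auto
qed

lemma B_ex: "\<exists>s\<le>t. Bc R t = Rb s + (t - s)"
proof (induction t)
  case 0 then show ?case by (simp add: Rb0)
next
  case (Suc t)
  then obtain s where s: "s \<le> t" "Bc R t = Rb s + (t - s)" by blast
  show ?case
  proof (cases "Bc R t < R t")
    case True
    then have "Bc R (Suc t) = Rb s + (Suc t - s)" using s by simp
    then show ?thesis using s by (intro exI[of _ s]) auto
  next
    case False
    have "Rb t \<le> Rb (Suc t)" by (rule Rb_mono) simp
    then have "Bc R (Suc t) = Rb (Suc t) + (Suc t - Suc t)"
      using False B_le_Rb[of t] R_Rb[of t] by simp
    then show ?thesis by blast
  qed
qed

lemma B_upper: "s \<le> t \<Longrightarrow> Bc R t \<le> Rb s + (t - s)"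
  using Bc_lip[of s t R] B_le_Rb[of s] by simp

lemma B_subadd: "Bc R (a + L) \<le> Bc R a + Bc R L"
proof -
  obtain s where s: "s \<le> a" "Bc R a = Rb s + (a - s)" using B_ex by blast
  obtain x where x: "x \<le> L" "Bc R L = Rb x + (L - x)" using B_ex by blast
  have "Bc R (a + L) \<le> Rb (s + x) + (a + L - (s + x))" using s x by (intro B_upper) simp
  also have "\<dots> \<le> Rb s + Rb x + (a + L - (s + x))" using Rb_sub[of s x] by simp
  also have "\<dots> = Bc R a + Bc R L" using s x by simp
  finally show ?thesis .
qed

end

lemma free_window: assumes "arrv R Rb"
  shows "(a - Bc R a) + (L - Bc R L) \<le> (a + L) - Bc R (a + L)"
  using arrv.B_subadd[OF assms, of a L] Bc_le[of R a] Bc_le[of R L] by linarith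

lemma mod_bound:
  assumes "W 0 = 0" "\<And>t. W (Suc t) = W t + (if \<not> Bc R t < R t \<and> P t then 1 else 0)"
  shows "W t \<le> t - Bc R t"
proof (induction t)
  case 0 then show ?case using assms by simp
next
  case (Suc t)
  then show ?case using assms(2)[of t] Bc_le[of R t] by auto
qed

lemma orig_inv:
  assumes "W 0 = 0" "\<And>t. W (Suc t) = W t + (if \<not> Bc R t < R t \<and> (W t div c) * T \<le> t then 1 else 0)"
  shows "\<exists>s\<le>t. W t + (s - Bc R s) = W s + (t - Bc R t) \<and> s \<le> (W s div c) * T"
proof (induction t)
  case 0 then show ?case using assms by simp
next
  case (Suc t)
  then obtain s where s: "s \<le> t" "W t + (s - Bc R s) = W s + (t - Bc R t)" "s \<le> (W s div c) * T" by blast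
  show ?case
  proof (cases "\<not> Bc R t < R t \<and> \<not> (W t div c) * T \<le> t")
    case True
    then have "W (Suc t) = W t" using assms(2)[of t] by simp
    then have "Suc t \<le> (W (Suc t) div c) * T" using True by simp
    then show ?thesis by (intro exI[of _ "Suc t"]) simp
  next
    case False
    have B: "Bc R t \<le> t" by (rule Bc_le)
    have E: "W (Suc t) + (s - Bc R s) = W s + (Suc t - Bc R (Suc t))"
    proof (cases "Bc R t < R t")
      case True
      then have "W (Suc t) = W t" "Bc R (Suc t) = Bc R t + 1" using assms(2)[of t] by simp_all
      then show ?thesis using s(2) B by linarith
    next
      case F2: False
      then have "W (Suc t) = W t + 1" "Bc R (Suc t) = Bc R t" using False assms(2)[of t] by simp_all
      then show ?thesis using s(2) B by linarith
    qed
    show ?thesis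
    proof (rule exI[of _ s], intro conjI)
      show "s \<le> Suc t" using s(1) by simp
      show "W (Suc t) + (s - Bc R s) = W s + (Suc t - Bc R (Suc t))" by (rule E)
      show "s \<le> (W s div c) * T" by (rule s(3))
    qed
  qed
qed


primrec Wc :: "nat \<Rightarrow> (nat \<Rightarrow> nat) \<Rightarrow> (nat \<Rightarrow> nat \<Rightarrow> nat) \<Rightarrow> nat \<Rightarrow> nat \<Rightarrow> nat" where
  "Wc n C arr j 0 = 0"
| "Wc n C arr j (Suc t) = Wc n C arr j t +
     (if fp_choice n C arr (fp_service n C arr t) t = Some j then 1 else 0)"

lemma svc_formula:
  assumes "C j > 0"
  shows "fp_service n C arr t j k = min (C j) (Wc n C arr j t - k * C j)"
proof (induction t arbitrary: k)
  case 0 show ?case by simp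
next
  case (Suc t)
  let ?s = "fp_service n C arr t"
  have cur: "cur_job C ?s j = Wc n C arr j t div C j"
    unfolding cur_job_def using Suc.IH least_div[OF assms] by simp
  show ?case
  proof (cases "fp_choice n C arr ?s t = Some j")
    case True
    then show ?thesis using arith1[OF assms, of "Wc n C arr j t" k]
      by (simp add: Let_def Suc.IH cur)
  next
    case False then show ?thesis by (simp add: Let_def Suc.IH)
  qed
qed

lemma cur_job_eq:
  assumes "C j > 0"
  shows "cur_job C (fp_service n C arr t) j = Wc n C arr j t div C j"
  unfolding cur_job_def using svc_formula[where C=C and j=j, OF assms] least_div[OF assms] by simp

lemma ready_iff:
  assumes "C j > 0"
  shows "task_ready C arr (fp_service n C arr t) t j \<longleftrightarrow> arr j (Wc n C arr j t div C j) \<le> t"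
proof -
  have "fp_service n C arr t j (Wc n C arr j t div C j) < C j"
    using svc_formula[where C=C and j=j, OF assms] assms by (simp add: minus_div_mult_eq_mod)
  then show ?thesis unfolding task_ready_def cur_job_eq[where C=C and j=j, OF assms] by simp
qed

lemma ready_per:
  assumes "C j > 0" "T j > 0"
  shows "task_ready C (periodic_arr T) (fp_service n C (periodic_arr T) t) t j
     \<longleftrightarrow> Wc n C (periodic_arr T) j t < C j * (t div T j + 1)"
proof -
  let ?w = "Wc n C (periodic_arr T) j t"
  have "(?w div C j) * T j \<le> t \<longleftrightarrow> ?w div C j \<le> t div T j"
    using assms(2) by (simp add: less_eq_div_iff_mult_less_eq)
  also have "\<dots> \<longleftrightarrow> ?w div C j < t div T j + 1" by linarith
  also have "\<dots> \<longleftrightarrow> ?w < C j * (t div T j + 1)"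
    using assms(1) by (simp add: div_less_iff_less_mult mult.commute)
  finally show ?thesis unfolding ready_iff[where C=C and j=j, OF assms(1)] periodic_arr_def .
qed

lemma choice_eq:
  assumes "\<exists>j\<in>{1..n}. task_ready C arr s t j"
  shows "fp_choice n C arr s t = Some (LEAST j. j \<in> {1..n} \<and> task_ready C arr s t j)"
  unfolding fp_choice_def if_P[OF assms] ..

lemma choice_None:
  assumes "\<not> (\<exists>j\<in>{1..n}. task_ready C arr s t j)"
  shows "fp_choice n C arr s t = None"
  unfolding fp_choice_def if_not_P[OF assms] ..

lemma choice_Some:
  "fp_choice n C arr s t = Some j \<longleftrightarrow>
     j \<in> {1..n} \<and> task_ready C arr s t j \<and> (\<forall>i\<in>{1..<j}. \<not> task_ready C arr s t i)"
proof
  assume a: "fp_choice n C arr s t = Some j"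
  have ex: "\<exists>j\<in>{1..n}. task_ready C arr s t j"
  proof (rule ccontr)
    assume "\<not> (\<exists>j\<in>{1..n}. task_ready C arr s t j)"
    from choice_None[OF this] a show False by simp
  qed
  have j: "j = (LEAST j. j \<in> {1..n} \<and> task_ready C arr s t j)"
    using choice_eq[OF ex] a by simp
  from ex obtain j0 where "j0 \<in> {1..n} \<and> task_ready C arr s t j0" by blast
  then have jr: "j \<in> {1..n} \<and> task_ready C arr s t j" unfolding j by (rule LeastI)
  moreover have "\<forall>i\<in>{1..<j}. \<not> task_ready C arr s t i"
  proof (intro ballI notI)
    fix i assume i: "i \<in> {1..<j}" "task_ready C arr s t i"
    then have "i \<in> {1..n}" using jr by auto
    with i(2) have "j \<le> i" unfolding j by (intro Least_le) (rule conjI)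
    with i(1) show False by simp
  qed
  ultimately show "j \<in> {1..n} \<and> task_ready C arr s t j \<and> (\<forall>i\<in>{1..<j}. \<not> task_ready C arr s t i)" by (rule conjI[OF _ conjI[OF _]] | blast)+
next
  assume a: "j \<in> {1..n} \<and> task_ready C arr s t j \<and> (\<forall>i\<in>{1..<j}. \<not> task_ready C arr s t i)"
  have "(LEAST j. j \<in> {1..n} \<and> task_ready C arr s t j) = j"
  proof (rule Least_equality)
    show "j \<in> {1..n} \<and> task_ready C arr s t j" using a by blast
    fix y assume y: "y \<in> {1..n} \<and> task_ready C arr s t y"
    show "j \<le> y"
    proof (rule ccontr)
      assume "\<not> j \<le> y"
      then have "y \<in> {1..<j}" using y by auto
      then have "\<not> task_ready C arr s t y" using a by blast
      with y show False by blast
    qed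
  qed
  moreover have ex: "\<exists>j\<in>{1..n}. task_ready C arr s t j" using a by blast
  ultimately show "fp_choice n C arr s t = Some j" using choice_eq[OF ex] by simp
qed

lemma choice_hp:
  "(\<exists>j\<in>{1..<n}. fp_choice n C arr s t = Some j) \<longleftrightarrow> (\<exists>j\<in>{1..<n}. task_ready C arr s t j)"
proof
  assume "\<exists>j\<in>{1..<n}. fp_choice n C arr s t = Some j"
  then obtain j where j: "j \<in> {1..<n}" "fp_choice n C arr s t = Some j" by blast
  then have "task_ready C arr s t j" using choice_Some[of n C arr s t j] by blast
  then show "\<exists>j\<in>{1..<n}. task_ready C arr s t j" using j(1) by blast
next
  assume "\<exists>j\<in>{1..<n}. task_ready C arr s t j"
  then obtain j where j: "j \<in> {1..<n}" "task_ready C arr s t j" by blast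
  let ?L = "LEAST j. j \<in> {1..n} \<and> task_ready C arr s t j"
  have ex: "\<exists>j\<in>{1..n}. task_ready C arr s t j" using j by auto
  have "?L \<in> {1..n} \<and> task_ready C arr s t ?L" by (rule LeastI[of _ j]) (use j in auto)
  moreover have "?L \<le> j" by (rule Least_le) (use j in auto)
  ultimately have "?L \<in> {1..<n}" using j by auto
  moreover have "fp_choice n C arr s t = Some ?L" by (rule choice_eq[OF ex])
  ultimately show "\<exists>j\<in>{1..<n}. fp_choice n C arr s t = Some j" by blast
qed

lemma ind_sum: "(\<Sum>j\<in>{1..<n::nat}. (if c = Some j then 1 else 0::nat)) = (if \<exists>j\<in>{1..<n}. c = Some j then 1 else 0)"
proof (cases c)
  case None then show ?thesis by simp
next
  case (Some a)
  have "(\<Sum>j\<in>{1..<n}. (if c = Some j then 1 else 0::nat)) = (\<Sum>j\<in>{1..<n}. (if a = j then 1 else 0::nat))"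
    using Some by (intro sum.cong) auto
  also have "\<dots> = (if a \<in> {1..<n} then 1 else 0)"
    by (rule sum.delta') simp
  finally have eq: "(\<Sum>j\<in>{1..<n}. (if c = Some j then 1 else 0::nat)) = (if a \<in> {1..<n} then 1 else 0)" .
  have "(\<exists>j\<in>{1..<n}. c = Some j) = (a \<in> {1..<n})" using Some by auto
  then show ?thesis using eq by (simp only:)
qed


lemma divT: "(T::nat) > 0 \<Longrightarrow> (Suc u + T - 1) div T = u div T + 1"
  by (simp add: div_add_self2)

lemma divT2: "(T::nat) > 0 \<Longrightarrow> (u + T) div T = u div T + 1"
  by (simp add: div_add_self2)

definition Rf :: "nat \<Rightarrow> (nat \<Rightarrow> nat) \<Rightarrow> (nat \<Rightarrow> nat) \<Rightarrow> nat \<Rightarrow> nat" where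
  "Rf n C T u = (\<Sum>j\<in>{1..<n}. C j * (u div T j + 1))"

definition Rbf :: "nat \<Rightarrow> (nat \<Rightarrow> nat) \<Rightarrow> (nat \<Rightarrow> nat) \<Rightarrow> nat \<Rightarrow> nat" where
  "Rbf n C T u = (\<Sum>j\<in>{1..<n}. C j * ((u + T j - 1) div T j))"

lemma arrv_inst:
  assumes "\<forall>j\<in>{1..n}. C j > 0 \<and> T j > 0"
  shows "arrv (Rf n C T) (Rbf n C T)"
proof
  have T: "\<And>j. j \<in> {1..<n} \<Longrightarrow> T j > 0" using assms by auto
  fix u show "Rf n C T u = Rbf n C T (Suc u)"
    unfolding Rf_def Rbf_def
  proof (rule sum.cong)
    fix j assume "j \<in> {1..<n}"
    then have "T j > 0" by (rule T)
    then have "(Suc u + T j - 1) div T j = u div T j + 1" by (rule divT)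
    then show "C j * (u div T j + 1) = C j * ((Suc u + T j - 1) div T j)" by simp
  qed simp
next
  fix x y :: nat assume "x \<le> y"
  then show "Rbf n C T x \<le> Rbf n C T y" unfolding Rbf_def
    by (intro sum_mono mult_le_mono2 div_le_mono) simp
next
  have T: "\<And>j. j \<in> {1..<n} \<Longrightarrow> T j > 0" using assms by auto
  show "Rbf n C T 0 = 0" unfolding Rbf_def
    by (rule sum.neutral) (use T in auto)
next
  have T: "\<And>j. j \<in> {1..<n} \<Longrightarrow> T j > 0" using assms by auto
  fix x y :: nat
  have "Rbf n C T (x + y) \<le> (\<Sum>j\<in>{1..<n}. C j * ((x + T j - 1) div T j) + C j * ((y + T j - 1) div T j))"
    unfolding Rbf_def
  proof (rule sum_mono)
    fix j assume "j \<in> {1..<n}"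
    then have "(x+y+T j-1) div T j \<le> (x+T j-1) div T j + (y+T j-1) div T j" using sub T by blast
    then have "C j * ((x+y+T j-1) div T j) \<le> C j * ((x+T j-1) div T j + (y+T j-1) div T j)"
      by (rule mult_le_mono2)
    then show "C j * ((x+y+T j-1) div T j) \<le> C j * ((x+T j-1) div T j) + C j * ((y+T j-1) div T j)"
      by (simp add: add_mult_distrib2)
  qed
  also have "\<dots> = Rbf n C T x + Rbf n C T y" unfolding Rbf_def by (rule sum.distrib)
  finally show "Rbf n C T (x + y) \<le> Rbf n C T x + Rbf n C T y" .
qed

lemma W_le:
  assumes "j \<in> {1..n}" "C j > 0" "T j > 0"
  shows "Wc n C (periodic_arr T) j t \<le> C j * ((t + T j - 1) div T j)"
proof (induction t)
  case 0 then show ?case by simp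
next
  case (Suc t)
  let ?s = "fp_service n C (periodic_arr T) t"
  have e: "(Suc t + T j - 1) div T j = t div T j + 1" using assms(3) by (rule divT)
  show ?case
  proof (cases "fp_choice n C (periodic_arr T) ?s t = Some j")
    case True
    then have "task_ready C (periodic_arr T) ?s t j" using choice_Some by blast
    then have "Wc n C (periodic_arr T) j t < C j * (t div T j + 1)"
      using ready_per[where C=C and j=j and T=T, OF assms(2,3)] by blast
    then show ?thesis using True e by simp
  next
    case False
    have "C j * ((t + T j - 1) div T j) \<le> C j * ((Suc t + T j - 1) div T j)"
      by (intro mult_le_mono2 div_le_mono) simp
    moreover have "Wc n C (periodic_arr T) j (Suc t) = Wc n C (periodic_arr T) j t" using False by simp
    ultimately show ?thesis using Suc.IH by linarith
  qed
qed

lemma busy_iff: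
  assumes "\<forall>j\<in>{1..n}. C j > 0 \<and> T j > 0"
  shows "(\<exists>j\<in>{1..<n}. task_ready C (periodic_arr T) (fp_service n C (periodic_arr T) t) t j)
     \<longleftrightarrow> (\<Sum>j\<in>{1..<n}. Wc n C (periodic_arr T) j t) < Rf n C T t"
proof -
  let ?W = "\<lambda>j. Wc n C (periodic_arr T) j t"
  let ?A = "\<lambda>j. C j * (t div T j + 1)"
  have le: "?W j \<le> ?A j" if "j \<in> {1..<n}" for j
  proof -
    have j: "j \<in> {1..n}" "C j > 0" "T j > 0" using that assms by auto
    have "(t + T j - 1) div T j \<le> (t + T j) div T j" by (rule div_le_mono) simp
    also have "\<dots> = t div T j + 1" using j(3) by (rule divT2)
    finally have "C j * ((t + T j - 1) div T j) \<le> ?A j" by (rule mult_le_mono2)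
    then show ?thesis using W_le[where C=C and T=T and j=j and n=n and t=t, OF j] by linarith
  qed
  have rd: "task_ready C (periodic_arr T) (fp_service n C (periodic_arr T) t) t j \<longleftrightarrow> ?W j < ?A j"
    if "j \<in> {1..<n}" for j
    using ready_per[of C j T n t] that assms by auto
  show ?thesis
  proof
    assume "\<exists>j\<in>{1..<n}. task_ready C (periodic_arr T) (fp_service n C (periodic_arr T) t) t j"
    then obtain j where "j \<in> {1..<n}" "?W j < ?A j" using rd by blast
    then show "sum ?W {1..<n} < Rf n C T t" unfolding Rf_def
      using le by (intro sum_strict_mono_ex1) auto
  next
    assume a: "sum ?W {1..<n} < Rf n C T t"
    show "\<exists>j\<in>{1..<n}. task_ready C (periodic_arr T) (fp_service n C (periodic_arr T) t) t j"
    proof (rule ccontr)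
      assume "\<not> ?thesis"
      then have "\<forall>j\<in>{1..<n}. ?A j \<le> ?W j" using rd by auto
      then have "sum ?A {1..<n} \<le> sum ?W {1..<n}" by (intro sum_mono) auto
      with a show False unfolding Rf_def by simp
    qed
  qed
qed

lemma hp_sum:
  assumes "\<forall>j\<in>{1..n}. C j > 0 \<and> T j > 0"
  shows "(\<Sum>j\<in>{1..<n}. Wc n C (periodic_arr T) j t) = Bc (Rf n C T) t"
proof (induction t)
  case 0 then show ?case by simp
next
  case (Suc t)
  let ?s = "fp_service n C (periodic_arr T) t"
  let ?c = "fp_choice n C (periodic_arr T) ?s t"
  have "(\<Sum>j\<in>{1..<n}. Wc n C (periodic_arr T) j (Suc t)) =
        (\<Sum>j\<in>{1..<n}. Wc n C (periodic_arr T) j t) + (\<Sum>j\<in>{1..<n}. (if ?c = Some j then 1 else 0))"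
    by (simp add: sum.distrib)
  also have "\<dots> = Bc (Rf n C T) t + (if \<exists>j\<in>{1..<n}. ?c = Some j then 1 else 0)"
    using Suc.IH ind_sum by simp
  also have "(\<exists>j\<in>{1..<n}. ?c = Some j) \<longleftrightarrow> Bc (Rf n C T) t < Rf n C T t"
    using choice_hp busy_iff[OF assms] Suc.IH by metis
  finally show ?case by simp
qed

lemma task_n_rec:
  assumes "n \<ge> 1" "\<forall>j\<in>{1..n}. C j > 0 \<and> T j > 0"
  shows "Wc n C (periodic_arr T) n (Suc t) = Wc n C (periodic_arr T) n t +
     (if \<not> Bc (Rf n C T) t < Rf n C T t \<and> (Wc n C (periodic_arr T) n t div C n) * T n \<le> t then 1 else 0)"
proof -
  let ?s = "fp_service n C (periodic_arr T) t"
  have n: "n \<in> {1..n}" "C n > 0" using assms by auto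
  have "fp_choice n C (periodic_arr T) ?s t = Some n \<longleftrightarrow>
     task_ready C (periodic_arr T) ?s t n \<and> (\<forall>i\<in>{1..<n}. \<not> task_ready C (periodic_arr T) ?s t i)"
    using choice_Some n(1) by blast
  also have "\<dots> \<longleftrightarrow> (Wc n C (periodic_arr T) n t div C n) * T n \<le> t \<and> \<not> Bc (Rf n C T) t < Rf n C T t"
  proof -
    have "task_ready C (periodic_arr T) ?s t n \<longleftrightarrow> (Wc n C (periodic_arr T) n t div C n) * T n \<le> t"
      using ready_iff[where C=C and j=n, OF n(2)] by (simp add: periodic_arr_def)
    moreover have "(\<exists>i\<in>{1..<n}. task_ready C (periodic_arr T) ?s t i) \<longleftrightarrow> Bc (Rf n C T) t < Rf n C T t"
      using busy_iff[OF assms(2)] hp_sum[OF assms(2)] by simp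
    then have "(\<forall>i\<in>{1..<n}. \<not> task_ready C (periodic_arr T) ?s t i) \<longleftrightarrow>
        \<not> Bc (Rf n C T) t < Rf n C T t" by blast
    ultimately show ?thesis by (simp only:)
  qed
  finally show ?thesis by auto
qed

lemma compl_iff:
  assumes "C n > 0"
  shows "completes_by n C arr n k t \<longleftrightarrow> (k + 1) * C n \<le> Wc n C arr n t"
proof -
  let ?w = "Wc n C arr n t"
  have "completes_by n C arr n k t \<longleftrightarrow> C n \<le> ?w - k * C n"
    unfolding completes_by_def svc_formula[where C=C and j=n, OF assms] by simp
  also have "\<dots> \<longleftrightarrow> C n + k * C n \<le> ?w" using assms by arith
  also have "\<dots> \<longleftrightarrow> (k + 1) * C n \<le> ?w" by simp
  finally show ?thesis .
qed

lemma F_mono: "s \<le> t \<Longrightarrow> s - Bc R s \<le> t - Bc R t"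
  using Bc_lip[of s t R] Bc_le[of R s] by linarith


theorem lemma1:
  fixes n :: nat and C T D :: "nat \<Rightarrow> nat"
  assumes "n \<ge> 1"
    and "\<forall>j\<in>{1..n}. C j > 0 \<and> T j > 0"
    and "\<forall>h\<in>{1..Lcm (T ` {1..n}) div T n}.
           completes_by n (C(n := h * C n)) (periodic_arr T) n 0 ((h - 1) * T n + D n)"
  shows "\<forall>k < Lcm (T ` {1..n}) div T n.
           completes_by n C (periodic_arr T) n k (periodic_arr T n k + D n)"
proof (intro allI impI)
  fix k assume k: "k < Lcm (T ` {1..n}) div T n"
  let ?arr = "periodic_arr T"
  let ?R = "Rf n C T"
  let ?B = "Bc ?R"
  let ?W = "Wc n C ?arr n"
  have Cn: "C n > 0" "T n > 0" using assms(1,2) by auto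
  define t where "t = k * T n + D n"
  have tdef: "periodic_arr T n k + D n = t" unfolding t_def periodic_arr_def by simp
  have arrv: "arrv ?R (Rbf n C T)" by (rule arrv_inst[OF assms(2)])
  have "\<exists>s\<le>t. ?W t + (s - ?B s) = ?W s + (t - ?B t) \<and> s \<le> (?W s div C n) * T n"
    by (rule orig_inv[where W="?W" and R="?R" and c="C n" and T="T n"])
       (simp, rule task_n_rec[OF assms(1,2)])
  then obtain s where s: "s \<le> t" "?W t + (s - ?B s) = ?W s + (t - ?B t)" "s \<le> (?W s div C n) * T n"
    by blast
  define m where "m = ?W s div C n"
  have Wm: "m * C n \<le> ?W s" unfolding m_def using div_mult_mod_eq[of "?W s" "C n"] by linarith
  have Fst: "s - ?B s \<le> t - ?B t" by (rule F_mono[OF s(1)])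
  have goal: "(k+1) * C n \<le> ?W t"
  proof (cases "k + 1 \<le> m")
    case True
    then have "(k+1)*C n \<le> m * C n" by (rule mult_le_mono1)
    then show ?thesis using Wm s(2) Fst by linarith
  next
    case False
    then have mk: "m \<le> k" by simp
    define h where "h = k + 1 - m"
    define d where "d = (k - m) * T n + D n"
    have h: "h \<in> {1..Lcm (T ` {1..n}) div T n}" using k mk unfolding h_def by auto
    have hd: "(h - 1) * T n + D n = d" unfolding h_def d_def using mk by simp
    let ?C' = "C(n := h * C n)"
    have H': "\<forall>j\<in>{1..n}. ?C' j > 0 \<and> T j > 0" using assms(2) h by auto
    have R': "Rf n ?C' T = ?R" unfolding Rf_def by (rule ext, rule sum.cong) auto
    have c': "completes_by n ?C' ?arr n 0 d" using assms(3) h hd by auto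
    have C'n: "?C' n > 0" using h Cn(1) by simp
    have "(0+1) * ?C' n \<le> Wc n ?C' ?arr n d" using c' compl_iff[where C="?C'" and n=n, OF C'n] by blast
    then have hW: "h * C n \<le> Wc n ?C' ?arr n d" by simp
    have "Wc n ?C' ?arr n d \<le> d - Bc (Rf n ?C' T) d"
      by (rule mod_bound[where P="\<lambda>u. (Wc n ?C' ?arr n u div ?C' n) * T n \<le> u"])
         (simp, rule task_n_rec[OF assms(1) H'])
    then have hF: "h * C n \<le> d - ?B d" using hW R' by simp
    have win: "(m*T n - ?B (m*T n)) + (d - ?B d) \<le> (m*T n + d) - ?B (m*T n + d)"
      by (rule free_window[OF arrv])
    have mt: "m * T n \<le> k * T n" using mk by simp
    have e: "(k - m) * T n = k * T n - m * T n" by (simp add: diff_mult_distrib)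
    have md: "m * T n + d = t" unfolding d_def t_def using e mt by linarith
    have sm: "s - ?B s \<le> m*T n - ?B (m * T n)" using F_mono s(3) unfolding m_def by blast
    have hm: "(k+1) * C n = m * C n + h * C n" unfolding h_def using mk
      by (simp add: add_mult_distrib[symmetric])
    have win': "(m*T n - ?B (m*T n)) + (d - ?B d) \<le> t - ?B t" using win md by simp
    show ?thesis using s(2) Wm hF win' sm hm by linarith
  qed
  then show "completes_by n C ?arr n k (periodic_arr T n k + D n)"
    using compl_iff[where C=C and n=n, OF Cn(1)] tdef by simp
qed

end
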